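(* Let $(X,d_X)$ be a geodesic metric space, let $n\ge 2$, and let $\delta,\epsilon,R>0$. Suppose $F\colon\mathbb{H}^n\to X$ satisfies: (1) for every $x\in\mathbb{R}^{n-1}$, $F\circ\eta_x\colon\mathbb{R}\to X$ is a geodesic (i.e. an isometric embedding of $\mathbb{R}$); (2) for distinct $x,x'\in\mathbb{R}^{n-1}$, the geodesics $F\circ\eta_x$ and $F\circ\eta_{x'}$ are two sides of an ideal $\delta$-slim triangle in $X$; (3) for all $x,x'\in\mathbb{R}^{n-1}$ and $t\in\mathbb{R}$, if $e^{-t}|x-x'|<\epsilon$ then $d_X(F(x,t),F(x',t))\le R$; (4) whenever $(x_k,t_k),(x_k',t_k)\in\mathbb{H}^n$ satisfy $\lim_{k\to\infty} e^{-t_k}|x_k-x_k'|=\infty$, we have $\lim_{k\to\infty} d_X(F(x_k,t_k),F(x_k',t_k))=\infty$. Then there exists $K\ge0$ such that $|d_{\mathbb{H}}(p,q) - d_X(F(p),F(q))|\le K$ for all $p,q\in\mathbb{H}^n$.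
   Context: Exponential model of hyperbolic space: $\mathbb{H}^n=\mathbb{R}^{n-1}\times\mathbb{R}$ with coordinates $(x,t)$ and metric $ds^2=e^{-2t}(dx_1^2+\dots+dx_{n-1}^2)+dt^2$; $d_{\mathbb{H}}$ is its distance. It is isometric to the upper half-space model via $(x,t)\mapsto(x,e^t)$. For $x\in\mathbb{R}^{n-1}$, the vertical geodesic is $\eta_x(t)=(x,t)$, parametrized by arc length. "$F\circ\eta_x$ and $F\circ\eta_{x'}$ are two sides of an ideal $\delta$-slim triangle" means there is a bi-infinite geodesic $\mathcal{R}_X$ in $X$ such that the three geodesics $F\circ\eta_x$, $F\circ\eta_{x'}$, $\mathcal{R}_X$ form an ideal triangle each of whose sides lies in the closed $\delta$-neighborhood of the union of the other two. *)

theory Defs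
  imports "HOL-Analysis.Analysis"
begin

text \<open>Exponential model of hyperbolic n-space: points (x,t) with x in R^(n-1)
  (here real^'n, so n - 1 = CARD('n) >= 1, i.e. n >= 2) and t real.
  Distance: pull-back of the upper half-space distance via (x,t) |-> (x, e^t).\<close>

type_synonym 'n hpt = "(real ^ 'n) \<times> real"

definition hdist :: "'n::finite hpt \<Rightarrow> 'n hpt \<Rightarrow> real" where
  "hdist p q = arcosh (1 + ((norm (fst p - fst q))\<^sup>2 + (exp (snd p) - exp (snd q))\<^sup>2)
                             / (2 * exp (snd p) * exp (snd q)))"

definition vgeod :: "real ^ 'n \<Rightarrow> real \<Rightarrow> 'n hpt" where
  "vgeod x t = (x, t)"

definition geodesic_space :: "'a::metric_space set \<Rightarrow> bool" where
  "geodesic_space S \<longleftrightarrow> (\<forall>p\<in>S. \<forall>q\<in>S. \<exists>\<gamma>::real \<Rightarrow> 'a.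
     \<gamma> 0 = p \<and> \<gamma> (dist p q) = q \<and> \<gamma> ` {0..dist p q} \<subseteq> S \<and>
     (\<forall>s\<in>{0..dist p q}. \<forall>t\<in>{0..dist p q}. dist (\<gamma> s) (\<gamma> t) = \<bar>s - t\<bar>))"

definition geodesic_line :: "(real \<Rightarrow> 'a::metric_space) \<Rightarrow> bool" where
  "geodesic_line \<gamma> \<longleftrightarrow> (\<forall>s t. dist (\<gamma> s) (\<gamma> t) = \<bar>s - t\<bar>)"

text \<open>Two geodesic rays r1, r2 (defined on [0,oo)) define the same ideal point:
  they are at finite Hausdorff distance.\<close>
definition asymptotic_rays :: "(real \<Rightarrow> 'a::metric_space) \<Rightarrow> (real \<Rightarrow> 'a) \<Rightarrow> bool" where
  "asymptotic_rays r1 r2 \<longleftrightarrow> (\<exists>C. (\<forall>t\<ge>0. \<exists>s\<ge>0. dist (r1 t) (r2 s) \<le> C) \<and>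
                                   (\<forall>s\<ge>0. \<exists>t\<ge>0. dist (r1 t) (r2 s) \<le> C))"

definition pos_ray :: "(real \<Rightarrow> 'a) \<Rightarrow> real \<Rightarrow> 'a" where "pos_ray \<gamma> t = \<gamma> t"
definition neg_ray :: "(real \<Rightarrow> 'a) \<Rightarrow> real \<Rightarrow> 'a" where "neg_ray \<gamma> t = \<gamma> (- t)"

definition ideal_slim_sides :: "real \<Rightarrow> (real \<Rightarrow> 'a::metric_space) \<Rightarrow> (real \<Rightarrow> 'a) \<Rightarrow> bool" where
  "ideal_slim_sides \<delta> g1 g2 \<longleftrightarrow> (\<exists>g3. geodesic_line g3 \<and>
     asymptotic_rays (pos_ray g1) (pos_ray g2) \<and>
     asymptotic_rays (neg_ray g1) (neg_ray g3) \<and>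
     asymptotic_rays (neg_ray g2) (pos_ray g3) \<and>
     (\<forall>t. infdist (g1 t) (range g2 \<union> range g3) \<le> \<delta>) \<and>
     (\<forall>t. infdist (g2 t) (range g1 \<union> range g3) \<le> \<delta>) \<and>
     (\<forall>t. infdist (g3 t) (range g1 \<union> range g2) \<le> \<delta>))"

end

theory Submission
  imports Defs
begin

lemma infdist_lt_ex:
  fixes x :: "'a::metric_space"
  assumes "A \<noteq> {}" "infdist x A < e"
  shows "\<exists>a\<in>A. dist x a < e"
proof -
  have "(INF a\<in>A. dist x a) < e" using assms infdist_notempty by metis
  moreover have "bdd_below ((\<lambda>a. dist x a) ` A)" by (rule bdd_belowI[of _ 0]) auto
  ultimately show ?thesis using assms(1) by (simp add: cINF_less_iff)
qed

lemma arcosh_bounds: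
  fixes z :: real assumes "z \<ge> 1"
  shows "ln z \<le> arcosh z" "arcosh z \<le> ln z + ln 2"
proof -
  have s0: "0 \<le> sqrt (z^2 - 1)" using assms by simp
  have s1: "sqrt (z^2 - 1) \<le> z"
  proof -
    have "sqrt (z^2 - 1) \<le> sqrt (z^2)" by (rule real_sqrt_le_mono) simp
    then show ?thesis using assms by simp
  qed
  show "ln z \<le> arcosh z" using assms s0 by (subst arcosh_real_def) (auto intro: ln_mono)
  have "arcosh z \<le> ln (2*z)" unfolding arcosh_real_def[OF assms] by (intro ln_mono) (use s0 s1 assms in linarith)+
  also have "\<dots> = ln z + ln 2" using assms by (simp add: ln_mult)
  finally show "arcosh z \<le> ln z + ln 2" .
qed

lemma hd_est:
  fixes t t' sg N :: real
  assumes "exp (2 * sg) \<le> N" "N \<le> 3 * exp (2 * sg)" "1 \<le> N / (2 * exp t * exp t')"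
  shows "\<bar>arcosh (N / (2 * exp t * exp t')) - (2 * sg - t - t')\<bar> \<le> ln 3"
proof -
  have Np: "N > 0" using assms(1) by (smt (verit) exp_gt_zero)
  have l: "ln (N / (2 * exp t * exp t')) = ln N - ln 2 - t - t'"
    using Np by (simp add: ln_div ln_mult)
  have a1: "2 * sg \<le> ln N" using assms(1) Np by (metis ln_exp ln_le_cancel_iff exp_gt_zero)
  have a2: "ln N \<le> ln 3 + 2 * sg" using assms(2) Np
  proof -
    have "ln N \<le> ln (3 * exp (2 * sg))" using assms(2) Np by simp
    also have "\<dots> = ln 3 + 2 * sg" by (simp add: ln_mult)
    finally show ?thesis .
  qed
  have "ln 2 \<le> ln (3::real)" by simp
  then show ?thesis using arcosh_bounds[OF assms(3)] l a1 a2 by linarith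
qed


lemma coarse_mono:
  fixes \<phi> :: "real \<Rightarrow> real" and a c :: real
  assumes c: "c \<ge> 0"
    and H: "\<And>u v. u \<le> a \<Longrightarrow> v \<le> a \<Longrightarrow> \<bar>\<bar>\<phi> u - \<phi> v\<bar> - \<bar>u - v\<bar>\<bar> \<le> c"
  shows "\<exists>sg. (sg = 1 \<or> sg = -1) \<and> (\<forall>u\<le>a. \<bar>\<phi> u - \<phi> a - sg*(a-u)\<bar> \<le> 4*c)"
proof -
  define us where "us = a - (2*c+1)"
  have us: "us \<le> a" using c by (simp add: us_def)
  have Hs: "\<bar>\<bar>\<phi> us - \<phi> a\<bar> - (2*c+1)\<bar> \<le> c" using H[OF us order.refl] c by (simp add: us_def)
  show ?thesis
  proof (cases "\<phi> us - \<phi> a \<ge> 0")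
    case True
    show ?thesis
    proof (intro exI[of _ 1] conjI allI impI)
      fix u assume u: "u \<le> a"
      have h1: "\<bar>\<bar>\<phi> u - \<phi> a\<bar> - \<bar>u - a\<bar>\<bar> \<le> c" using H[OF u order.refl] .
      have h2: "\<bar>\<bar>\<phi> u - \<phi> us\<bar> - \<bar>u - us\<bar>\<bar> \<le> c" using H[OF u us] .
      show "\<bar>\<phi> u - \<phi> a - 1*(a-u)\<bar> \<le> 4*c"
        using h1 h2 Hs True u c unfolding us_def by (smt (verit))
    qed simp
  next
    case False
    show ?thesis
    proof (intro exI[of _ "-1"] conjI allI impI)
      fix u assume u: "u \<le> a"
      have h1: "\<bar>\<bar>\<phi> u - \<phi> a\<bar> - \<bar>u - a\<bar>\<bar> \<le> c" using H[OF u order.refl] .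
      have h2: "\<bar>\<bar>\<phi> u - \<phi> us\<bar> - \<bar>u - us\<bar>\<bar> \<le> c" using H[OF u us] .
      show "\<bar>\<phi> u - \<phi> a - (-1)*(a-u)\<bar> \<le> 4*c"
        using h1 h2 Hs False u c unfolding us_def by (smt (verit))
    qed simp
  qed
qed


lemma dist_quad:
  fixes P Q P' Q' :: "'a::metric_space"
  assumes "dist P P' < e" "dist Q Q' < e"
  shows "\<bar>dist P Q - dist P' Q'\<bar> \<le> 2*e"
proof -
  have "dist P Q \<le> dist P P' + dist P' Q' + dist Q' Q" by (metis dist_triangle dist_triangle2 add.commute order_trans add_le_cancel_left) 
  moreover have "dist P' Q' \<le> dist P' P + dist P Q + dist Q Q'" by (metis dist_triangle dist_triangle2 add.commute order_trans add_le_cancel_left)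
  ultimately show ?thesis using assms by (simp add: dist_commute)
qed

lemma upper_est:
  fixes \<gamma> \<gamma>' :: "real \<Rightarrow> 'a::metric_space"
  assumes g1: "\<And>s t. dist (\<gamma> s) (\<gamma> t) = \<bar>s - t\<bar>"
    and g2: "\<And>s t. dist (\<gamma>' s) (\<gamma>' t) = \<bar>s - t\<bar>"
    and up: "\<And>u. u \<ge> l + c0 \<Longrightarrow> dist (\<gamma> u) (\<gamma>' u) \<le> R"
    and c0: "c0 \<ge> 0"
  shows "dist (\<gamma> t) (\<gamma>' t') \<le> 2 * max l (max t t') - t - t' + 2*c0 + R"
proof -
  define s where "s = max l (max t t') + c0"
  have "dist (\<gamma> t) (\<gamma>' t') \<le> dist (\<gamma> t) (\<gamma> s) + dist (\<gamma> s) (\<gamma>' s) + dist (\<gamma>' s) (\<gamma>' t')"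
    by (metis dist_triangle add_le_cancel_left order_trans add.assoc)
  also have "\<dots> \<le> \<bar>t - s\<bar> + R + \<bar>s - t'\<bar>" using up[of s] g1 g2 by (simp add: s_def)
  finally show ?thesis using c0 unfolding s_def by linarith
qed


lemma not_close:
  fixes \<gamma> \<gamma>' :: "real \<Rightarrow> 'a::metric_space"
  assumes g1: "\<And>s t. dist (\<gamma> s) (\<gamma> t) = \<bar>s - t\<bar>"
    and g2: "\<And>s t. dist (\<gamma>' s) (\<gamma>' t) = \<bar>s - t\<bar>"
    and up: "\<And>u. u \<ge> l + c0 \<Longrightarrow> dist (\<gamma> u) (\<gamma>' u) \<le> R"
    and lo: "dist (\<gamma> u) (\<gamma>' u) \<ge> 2*d + R + 1"
  shows "dist (\<gamma> u) (\<gamma>' v) \<ge> d"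
proof (rule ccontr)
  assume "\<not> ?thesis"
  then have cl: "dist (\<gamma> u) (\<gamma>' v) < d" by simp
  define w where "w = max (max u v) (l + c0)"
  have R: "dist (\<gamma> w) (\<gamma>' w) \<le> R" using up by (simp add: w_def)
  have "dist (\<gamma> u) (\<gamma> w) \<le> dist (\<gamma> u) (\<gamma>' v) + dist (\<gamma>' v) (\<gamma>' w) + dist (\<gamma>' w) (\<gamma> w)"
    by (metis dist_triangle add_le_cancel_left order_trans add.assoc)
  then have e1: "w - u < d + (w - v) + R" using g1 g2 cl R by (simp add: w_def dist_commute)
  have "dist (\<gamma>' v) (\<gamma>' w) \<le> dist (\<gamma>' v) (\<gamma> u) + dist (\<gamma> u) (\<gamma> w) + dist (\<gamma> w) (\<gamma>' w)"
    by (metis dist_triangle add_le_cancel_left order_trans add.assoc)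
  then have e2: "w - v < d + (w - u) + R" using g1 g2 cl R by (simp add: w_def dist_commute)
  have "dist (\<gamma> u) (\<gamma>' u) \<le> dist (\<gamma> u) (\<gamma>' v) + dist (\<gamma>' v) (\<gamma>' u)" by (rule dist_triangle)
  then have "dist (\<gamma> u) (\<gamma>' u) < d + d + R" using g2 cl e1 e2 by (simp add: abs_if split: if_splits)
  then show False using lo by simp
qed


lemma near_g:
  fixes \<gamma>' g :: "real \<Rightarrow> 'a::metric_space" and P :: 'a
  assumes slim: "infdist P (range \<gamma>' \<union> range g) \<le> \<delta>"
    and far: "\<And>v. dist P (\<gamma>' v) \<ge> \<delta> + 1"
  shows "\<exists>p. dist P (g p) < \<delta> + 1"
proof -
  have "range \<gamma>' \<union> range g \<noteq> {}" by simp
  from infdist_lt_ex[OF this, of P "\<delta>+1"] slim obtain y where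
    y: "y \<in> range \<gamma>' \<union> range g" "dist P y < \<delta> + 1" by force
  then show ?thesis using far by (auto simp: not_le[symmetric])
qed

lemma pair_lower:
  fixes \<gamma> \<gamma>' g :: "real \<Rightarrow> 'a::metric_space"
  assumes g1: "\<And>s t. dist (\<gamma> s) (\<gamma> t) = \<bar>s - t\<bar>"
    and g2: "\<And>s t. dist (\<gamma>' s) (\<gamma>' t) = \<bar>s - t\<bar>"
    and g3: "\<And>s t. dist (g s) (g t) = \<bar>s - t\<bar>"
    and slim1: "\<And>u. infdist (\<gamma> u) (range \<gamma>' \<union> range g) \<le> \<delta>"
    and slim2: "\<And>u. infdist (\<gamma>' u) (range \<gamma> \<union> range g) \<le> \<delta>"
    and up: "\<And>u. u \<ge> l + c0 \<Longrightarrow> dist (\<gamma> u) (\<gamma>' u) \<le> R"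
    and L1: "\<And>u. u \<le> l - L1 \<Longrightarrow> dist (\<gamma> u) (\<gamma>' u) \<ge> 2*(\<delta>+1) + R + 1"
    and L2: "\<And>u. u \<le> l - L2 \<Longrightarrow> dist (\<gamma> u) (\<gamma>' u) \<ge>
               (2*(\<delta>+1) + 16*(\<delta>+1) + (2*(\<delta>+1) + 2*L1 + 2*c0 + R)) + 1"
    and pos: "\<delta> \<ge> 0" "c0 \<ge> 0" "L1 \<ge> 0"
    and tt: "t \<le> l" "t' \<le> l"
  shows "dist (\<gamma> t) (\<gamma>' t') \<ge> 2*l - t - t' - ((2*(\<delta>+1) + 2*L1 + 2*c0 + R) + 16*(\<delta>+1) + 2*(\<delta>+1) + 2*L1)"
proof -
  define d where "d = \<delta> + 1"
  define a where "a = l - L1"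
  define B0 where "B0 = 2*d + 2*L1 + 2*c0 + R"
  have dpos: "d > 0" using pos by (simp add: d_def)
  have al: "a \<le> l" using pos by (simp add: a_def)
  have far1: "\<And>u v. u \<le> a \<Longrightarrow> dist (\<gamma> u) (\<gamma>' v) \<ge> d"
    using not_close[OF g1 g2 up] L1 unfolding a_def d_def by blast
  have up': "\<And>u. u \<ge> l + c0 \<Longrightarrow> dist (\<gamma>' u) (\<gamma> u) \<le> R" using up by (simp add: dist_commute)
  have far2: "\<And>u v. u \<le> a \<Longrightarrow> dist (\<gamma>' u) (\<gamma> v) \<ge> d"
    using not_close[OF g2 g1 up'] L1 unfolding a_def d_def by (metis dist_commute)
  have "\<forall>u. \<exists>p. u \<le> a \<longrightarrow> dist (\<gamma> u) (g p) < d"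
  proof
    fix u show "\<exists>p. u \<le> a \<longrightarrow> dist (\<gamma> u) (g p) < d"
    proof (cases "u \<le> a")
      case True
      then show ?thesis using near_g[OF slim1[of u]] far1[OF True] unfolding d_def by blast
    qed auto
  qed
  then obtain \<phi> where phi: "\<And>u. u \<le> a \<Longrightarrow> dist (\<gamma> u) (g (\<phi> u)) < d" by metis
  have "\<forall>u. \<exists>p. u \<le> a \<longrightarrow> dist (\<gamma>' u) (g p) < d"
  proof
    fix u show "\<exists>p. u \<le> a \<longrightarrow> dist (\<gamma>' u) (g p) < d"
    proof (cases "u \<le> a")
      case True
      then show ?thesis using near_g[OF slim2[of u]] far2[OF True] unfolding d_def by blast
    qed auto
  qed
  then obtain \<psi> where psi: "\<And>u. u \<le> a \<Longrightarrow> dist (\<gamma>' u) (g (\<psi> u)) < d" by metis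
  have Hphi: "\<bar>\<bar>\<phi> u - \<phi> v\<bar> - \<bar>u - v\<bar>\<bar> \<le> 2*d" if "u \<le> a" "v \<le> a" for u v
    using dist_quad[OF phi[OF that(1)] phi[OF that(2)]] g1 g3 by simp
  have Hpsi: "\<bar>\<bar>\<psi> u - \<psi> v\<bar> - \<bar>u - v\<bar>\<bar> \<le> 2*d" if "u \<le> a" "v \<le> a" for u v
    using dist_quad[OF psi[OF that(1)] psi[OF that(2)]] g2 g3 by simp
  obtain s1 where s1: "s1 = 1 \<or> s1 = -1" "\<And>u. u \<le> a \<Longrightarrow> \<bar>\<phi> u - \<phi> a - s1*(a-u)\<bar> \<le> 4*(2*d)"
    using coarse_mono[of "2*d" a \<phi>] Hphi dpos by auto
  obtain s2 where s2: "s2 = 1 \<or> s2 = -1" "\<And>u. u \<le> a \<Longrightarrow> \<bar>\<psi> u - \<psi> a - s2*(a-u)\<bar> \<le> 4*(2*d)"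
    using coarse_mono[of "2*d" a \<psi>] Hpsi dpos by auto
  have ua: "dist (\<gamma> a) (\<gamma>' a) \<le> 2*L1 + 2*c0 + R"
    using upper_est[where l=l and R=R and t=a and t'=a, OF g1 g2 up pos(2)] al pos by (simp add: a_def max_def split: if_splits)
  have "\<bar>dist (\<gamma> a) (\<gamma>' a) - dist (g (\<phi> a)) (g (\<psi> a))\<bar> \<le> 2*d"
    using dist_quad[OF phi psi] by simp
  then have AA: "\<bar>\<phi> a - \<psi> a\<bar> \<le> B0" using ua g3 unfolding B0_def by simp
  have sdiff: "s2 = - s1"
  proof (rule ccontr)
    assume "s2 \<noteq> - s1"
    then have eq: "s1 = s2" using s1(1) s2(1) by auto
    define u where "u = min a (l - L2)"
    have u: "u \<le> a" "u \<le> l - L2" by (auto simp: u_def)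
    have "\<bar>\<phi> u - \<psi> u\<bar> \<le> 16*d + B0"
      using s1(2)[OF u(1)] s2(2)[OF u(1), folded eq] AA by linarith
    moreover have "\<bar>dist (\<gamma> u) (\<gamma>' u) - dist (g (\<phi> u)) (g (\<psi> u))\<bar> \<le> 2*d"
      using dist_quad[OF phi psi] u by simp
    ultimately have "dist (\<gamma> u) (\<gamma>' u) \<le> 2*d + 16*d + B0" using g3 by simp
    then show False using L2[OF u(2)] unfolding B0_def d_def by simp
  qed
  have core: "dist (\<gamma> t1) (\<gamma>' t1') \<ge> 2*a - t1 - t1' - (B0 + 16*d + 2*d)" if t1: "t1 \<le> a" "t1' \<le> a" for t1 t1'
  proof -
    have "\<bar>\<phi> t1 - \<psi> t1'\<bar> \<ge> 2*a - t1 - t1' - B0 - 16*d"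
    proof (cases "s1 = 1")
      case True
      then have "s2 = -1" using sdiff by simp
      then show ?thesis using s2(2)[OF t1(2)] s1(2)[OF t1(1)] AA True t1 by auto
    next
      case False
      then have "s1 = -1" "s2 = 1" using sdiff s1(1) by auto
      then show ?thesis using s2(2)[OF t1(2)] s1(2)[OF t1(1)] AA t1 by auto
    qed
    moreover have "\<bar>dist (\<gamma> t1) (\<gamma>' t1') - dist (g (\<phi> t1)) (g (\<psi> t1'))\<bar> \<le> 2*d"
      using dist_quad[OF phi psi] t1 by simp
    ultimately show ?thesis using g3 by simp
  qed
  define t1 where "t1 = min t a"
  define t1' where "t1' = min t' a"
  have "dist (\<gamma> t1) (\<gamma>' t1') \<le> dist (\<gamma> t1) (\<gamma> t) + dist (\<gamma> t) (\<gamma>' t') + dist (\<gamma>' t') (\<gamma>' t1')"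
    by (metis dist_triangle add_le_cancel_left order_trans add.assoc)
  then have "dist (\<gamma> t) (\<gamma>' t') \<ge> dist (\<gamma> t1) (\<gamma>' t1') - (t - t1) - (t' - t1')"
    using g1 g2 by (simp add: t1_def t1'_def)
  moreover have "dist (\<gamma> t1) (\<gamma>' t1') \<ge> 2*a - t1 - t1' - (B0 + 16*d + 2*d)"
    by (rule core) (auto simp: t1_def t1'_def)
  ultimately show ?thesis unfolding a_def B0_def d_def by (simp add: algebra_simps)
qed


lemma exp2: "exp (2 * t) = (exp t)^2" for t :: real
  by (simp add: power2_eq_square exp_add[symmetric])

lemma hdist_form:
  fixes x x' :: "real ^ 'n::finite"
  shows "hdist (x,t) (x',t') = arcosh ((norm (x-x') ^ 2 + exp (2 * t) + exp (2 * t')) / (2 * exp t * exp t'))"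
    and "1 \<le> (norm (x-x') ^ 2 + exp (2 * t) + exp (2 * t')) / (2 * exp t * exp t')"
proof -
  have e: "1 + ((norm (x - x'))\<^sup>2 + (exp t - exp t')\<^sup>2) / (2 * exp t * exp t')
     = (norm (x-x') ^ 2 + exp (2 * t) + exp (2 * t')) / (2 * exp t * exp t')"
    unfolding exp2 by (simp add: field_simps power2_eq_square)
  show "hdist (x,t) (x',t') = arcosh ((norm (x-x') ^ 2 + exp (2 * t) + exp (2 * t')) / (2 * exp t * exp t'))"
    unfolding hdist_def using e by simp
  have "1 \<le> 1 + ((norm (x - x'))\<^sup>2 + (exp t - exp t')\<^sup>2) / (2 * exp t * exp t')" by simp
  then show "1 \<le> (norm (x-x') ^ 2 + exp (2 * t) + exp (2 * t')) / (2 * exp t * exp t')" using e by simp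
qed

lemma hd_bound_same:
  fixes x :: "real ^ 'n::finite"
  shows "\<bar>hdist (x,t) (x,t') - \<bar>t - t'\<bar>\<bar> \<le> ln 3"
proof -
  have "exp (2 * max t t') \<le> exp (2 * t) + exp (2 * t')" by (simp add: max_def add_increasing2 add_increasing)
  moreover have "exp (2 * t) + exp (2 * t') \<le> 3 * exp (2 * max t t')"
  proof -
    have "exp (2 * t) \<le> exp (2 * max t t')" "exp (2 * t') \<le> exp (2 * max t t')" by auto
    moreover have "0 < exp (2 * max t t')" by simp
    ultimately show ?thesis by linarith
  qed
  ultimately have "\<bar>hdist (x,t) (x,t') - (2 * max t t' - t - t')\<bar> \<le> ln 3"
    using hd_est[where t=t and t'=t' and sg="max t t'" and N="exp (2 * t) + exp (2 * t')"] hdist_form[where x=x and x'=x and t=t and t'=t'] by simp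
  moreover have "2 * max t t' - t - t' = \<bar>t - t'\<bar>" by (simp add: max_def abs_if)
  ultimately show ?thesis by simp
qed

lemma hd_bound_diff:
  fixes x x' :: "real ^ 'n::finite"
  assumes "x \<noteq> x'"
  shows "\<bar>hdist (x,t) (x',t') - (2 * max (ln (norm (x-x'))) (max t t') - t - t')\<bar> \<le> ln 3"
proof -
  define l where "l = ln (norm (x-x'))"
  define N where "N = norm (x-x') ^ 2 + exp (2 * t) + exp (2 * t')"
  define sg where "sg = max l (max t t')"
  have D: "exp (2 * l) = norm (x-x') ^ 2" using assms by (simp add: l_def exp2)
  have N: "N = exp (2 * l) + exp (2 * t) + exp (2 * t')" using D by (simp add: N_def)
  have m: "exp (2 * l) \<le> exp (2 * sg)" "exp (2 * t) \<le> exp (2 * sg)" "exp (2 * t') \<le> exp (2 * sg)"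
    by (auto simp: sg_def)
  have "sg = l \<or> sg = t \<or> sg = t'" by (auto simp: sg_def max_def)
  then have "exp (2 * sg) \<le> N" unfolding N by (auto simp: add_increasing2 add_increasing add_pos_pos)
  moreover have "N \<le> 3 * exp (2 * sg)" using m N by linarith
  ultimately show ?thesis
    using hd_est[where t=t and t'=t' and sg=sg and N=N] hdist_form[where x=x and x'=x' and t=t and t'=t'] unfolding N_def sg_def l_def by simp
qed


lemma h4_unif:
  fixes F :: "'n::finite hpt \<Rightarrow> 'a::metric_space"
  assumes h4: "\<And>xs xs' ts. filterlim (\<lambda>k. exp (- ts k) * norm (xs k - xs' k)) at_top sequentially \<Longrightarrow>
               filterlim (\<lambda>k. dist (F (xs k, ts k)) (F (xs' k, ts k))) at_top sequentially"
  shows "\<exists>L\<ge>0. \<forall>x x' u. x \<noteq> x' \<longrightarrow> u \<le> ln (norm (x - x')) - L \<longrightarrow> M \<le> dist (F (x,u)) (F (x',u))"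
proof -
  have "\<exists>\<Lambda>. \<forall>x x' u. \<Lambda> \<le> exp (- u) * norm (x - x') \<longrightarrow> M \<le> dist (F (x,u)) (F (x',u))"
  proof (rule ccontr)
    assume "\<not> ?thesis"
    then have "\<forall>k::nat. \<exists>x x' u. real k \<le> exp (- u) * norm (x - x') \<and> dist (F (x,u)) (F (x',u)) < M"
      by (auto simp: not_le)
    then obtain xs xs' ts where H: "\<And>k. real k \<le> exp (- ts k) * norm (xs k - xs' k)"
      "\<And>k. dist (F (xs k, ts k)) (F (xs' k, ts k)) < M" by metis
    have "filterlim (\<lambda>k. exp (- ts k) * norm (xs k - xs' k)) at_top sequentially"
      by (rule filterlim_at_top_mono[OF filterlim_real_sequentially]) (use H in auto)
    from h4[OF this] have "eventually (\<lambda>k. M \<le> dist (F (xs k, ts k)) (F (xs' k, ts k))) sequentially"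
      by (simp add: filterlim_at_top)
    then obtain k where "M \<le> dist (F (xs k, ts k)) (F (xs' k, ts k))" by (auto simp: eventually_sequentially)
    with H(2)[of k] show False by simp
  qed
  then obtain \<Lambda> where Lam: "\<And>x x' u. \<Lambda> \<le> exp (- u) * norm (x - x') \<Longrightarrow> M \<le> dist (F (x,u)) (F (x',u))"
    by blast
  show ?thesis
  proof (intro exI[of _ "ln (max \<Lambda> 1)"] conjI allI impI)
    show "0 \<le> ln (max \<Lambda> 1)" by simp
    fix x x' :: "real ^ 'n" and u assume xx: "x \<noteq> x'" and u: "u \<le> ln (norm (x - x')) - ln (max \<Lambda> 1)"
    have e: "exp (- u) * norm (x - x') = exp (ln (norm (x - x')) - u)"
      using xx by (simp add: exp_diff field_simps exp_minus)
    have "max \<Lambda> 1 = exp (ln (max \<Lambda> 1))" by simp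
    also have "\<dots> \<le> exp (ln (norm (x - x')) - u)"
    proof -
      have "ln (max \<Lambda> 1) \<le> ln (norm (x - x')) - u" using u by linarith
      then show ?thesis by (simp only: exp_le_cancel_iff)
    qed
    finally have "\<Lambda> \<le> exp (- u) * norm (x - x')" using e by linarith
    then show "M \<le> dist (F (x,u)) (F (x',u))" by (rule Lam)
  qed
qed


theorem lemma2p2:
  fixes F :: "'n::finite hpt \<Rightarrow> 'a::metric_space"
    and \<delta> \<epsilon> R :: real
  assumes geod: "geodesic_space (UNIV :: 'a set)"
    and pos: "\<delta> > 0" "\<epsilon> > 0" "R > 0"
    and h1: "\<And>x. geodesic_line (F \<circ> vgeod x)"
    and h2: "\<And>x x'. x \<noteq> x' \<Longrightarrow> ideal_slim_sides \<delta> (F \<circ> vgeod x) (F \<circ> vgeod x')"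
    and h3: "\<And>x x' t. exp (- t) * norm (x - x') < \<epsilon> \<Longrightarrow> dist (F (x, t)) (F (x', t)) \<le> R"
    and h4: "\<And>xs xs' ts. filterlim (\<lambda>k. exp (- ts k) * norm (xs k - xs' k)) at_top sequentially \<Longrightarrow>
               filterlim (\<lambda>k. dist (F (xs k, ts k)) (F (xs' k, ts k))) at_top sequentially"
  shows "\<exists>K\<ge>0. \<forall>p q. \<bar>hdist p q - dist (F p) (F q)\<bar> \<le> K"
proof -
  define c0 where "c0 = \<bar>ln \<epsilon>\<bar> + 1"
  have c0: "c0 \<ge> 0" by (simp add: c0_def)
  have up: "dist (F (x,u)) (F (x',u)) \<le> R" if xx: "x \<noteq> x'" and u: "u \<ge> ln (norm (x - x')) + c0" for x x' u
  proof (rule h3)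
    have e: "exp (- u) * norm (x - x') = exp (ln (norm (x - x')) - u)"
      using xx by (simp add: exp_diff field_simps exp_minus)
    have "ln (norm (x - x')) - u < ln \<epsilon>" using u unfolding c0_def by linarith
    then have "exp (ln (norm (x - x')) - u) < exp (ln \<epsilon>)" by (simp only: exp_less_cancel_iff)
    then show "exp (- u) * norm (x - x') < \<epsilon>" using e pos(2) by simp
  qed
  have gl: "\<And>x s t. dist (F (x,s)) (F (x,t)) = \<bar>s - t\<bar>"
    using h1 by (simp add: geodesic_line_def vgeod_def)
  obtain L1 where L1: "L1 \<ge> 0" "\<And>x x' u. x \<noteq> x' \<Longrightarrow> u \<le> ln (norm (x - x')) - L1 \<Longrightarrow>
      2*(\<delta>+1) + R + 1 \<le> dist (F (x,u)) (F (x',u))"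
    using h4_unif[of F "2*(\<delta>+1) + R + 1", OF h4] by blast
  obtain L2 where L2: "L2 \<ge> 0" "\<And>x x' u. x \<noteq> x' \<Longrightarrow> u \<le> ln (norm (x - x')) - L2 \<Longrightarrow>
      (2*(\<delta>+1) + 16*(\<delta>+1) + (2*(\<delta>+1) + 2*L1 + 2*c0 + R)) + 1 \<le> dist (F (x,u)) (F (x',u))"
    using h4_unif[of F "(2*(\<delta>+1) + 16*(\<delta>+1) + (2*(\<delta>+1) + 2*L1 + 2*c0 + R)) + 1", OF h4] by blast
  define K0 where "K0 = (2*(\<delta>+1) + 2*L1 + 2*c0 + R) + 16*(\<delta>+1) + 2*(\<delta>+1) + 2*L1"
  define K where "K = K0 + 2*c0 + R + ln 3"
  have K0: "K0 \<ge> 0" using pos L1 c0 by (simp add: K0_def)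
  have ln3: "ln (3::real) \<ge> 0" by simp
  show ?thesis
  proof (intro exI[of _ K] conjI allI)
    show "0 \<le> K" using K0 c0 pos ln3 by (simp add: K_def)
    fix p q :: "'n hpt"
    obtain x t where p: "p = (x,t)" by (cases p)
    obtain x' t' where q: "q = (x',t')" by (cases q)
    show "\<bar>hdist p q - dist (F p) (F q)\<bar> \<le> K"
    proof (cases "x = x'")
      case True
      have "dist (F p) (F q) = \<bar>t - t'\<bar>" using gl p q True by simp
      then show ?thesis using hd_bound_same[where x=x and t=t and t'=t'] p q True K0 c0 pos unfolding K_def by simp
    next
      case False
      define l where "l = ln (norm (x - x'))"
      define T where "T = 2 * max l (max t t') - t - t'"
      define \<gamma> where "\<gamma> = (\<lambda>s. F (x,s))"
      define \<gamma>' where "\<gamma>' = (\<lambda>s. F (x',s))"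
      have g1: "\<And>s t. dist (\<gamma> s) (\<gamma> t) = \<bar>s - t\<bar>" using gl by (simp add: \<gamma>_def)
      have g2: "\<And>s t. dist (\<gamma>' s) (\<gamma>' t) = \<bar>s - t\<bar>" using gl by (simp add: \<gamma>'_def)
      have upg: "\<And>u. u \<ge> l + c0 \<Longrightarrow> dist (\<gamma> u) (\<gamma>' u) \<le> R"
        using up[OF False] by (simp add: \<gamma>_def \<gamma>'_def l_def)
      have cg: "F \<circ> vgeod x = \<gamma>" "F \<circ> vgeod x' = \<gamma>'" by (auto simp: \<gamma>_def \<gamma>'_def vgeod_def fun_eq_iff)
      obtain g where g3: "\<And>s t. dist (g s) (g t) = \<bar>s - t\<bar>"
        and slim1: "\<And>u. infdist (\<gamma> u) (range \<gamma>' \<union> range g) \<le> \<delta>"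
        and slim2: "\<And>u. infdist (\<gamma>' u) (range \<gamma> \<union> range g) \<le> \<delta>"
        using h2[OF False] unfolding cg ideal_slim_sides_def geodesic_line_def by blast
      have U: "dist (\<gamma> t) (\<gamma>' t') \<le> T + 2*c0 + R"
        using upper_est[where l=l and R=R and t=t and t'=t', OF g1 g2 upg c0] unfolding T_def by simp
      have Lo: "dist (\<gamma> t) (\<gamma>' t') \<ge> T - max K0 (2*c0 + R)"
      proof (cases "t \<ge> l \<and> t \<ge> t'")
        case True
        have "dist (\<gamma>' t) (\<gamma>' t') \<le> dist (\<gamma>' t) (\<gamma> t) + dist (\<gamma> t) (\<gamma>' t')" by (rule dist_triangle)
        moreover have "dist (\<gamma> t) (\<gamma>' t) \<le> 2*c0 + R"
          using upper_est[where l=l and R=R and t=t and t'=t, OF g1 g2 upg c0] True by (simp add: max_def)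
        ultimately show ?thesis using g2 True unfolding T_def by (simp add: dist_commute max_def)
      next
        case c2: False
        show ?thesis
        proof (cases "t' \<ge> l \<and> t' \<ge> t")
          case True
          have "dist (\<gamma> t) (\<gamma> t') \<le> dist (\<gamma> t) (\<gamma>' t') + dist (\<gamma>' t') (\<gamma> t')" by (rule dist_triangle)
          moreover have "dist (\<gamma> t') (\<gamma>' t') \<le> 2*c0 + R"
            using upper_est[where l=l and R=R and t=t' and t'=t', OF g1 g2 upg c0] True by (simp add: max_def)
          ultimately show ?thesis using g1 True unfolding T_def by (simp add: dist_commute max_def)
        next
          case False
          then have tt: "t \<le> l" "t' \<le> l" using c2 by linarith+
          have L1g: "\<And>u. u \<le> l - L1 \<Longrightarrow> dist (\<gamma> u) (\<gamma>' u) \<ge> 2*(\<delta>+1) + R + 1"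
            using L1(2)[OF \<open>x \<noteq> x'\<close>] by (simp add: \<gamma>_def \<gamma>'_def l_def)
          have L2g: "\<And>u. u \<le> l - L2 \<Longrightarrow> dist (\<gamma> u) (\<gamma>' u) \<ge>
               (2*(\<delta>+1) + 16*(\<delta>+1) + (2*(\<delta>+1) + 2*L1 + 2*c0 + R)) + 1"
            using L2(2)[OF \<open>x \<noteq> x'\<close>] by (simp add: \<gamma>_def \<gamma>'_def l_def)
          have "dist (\<gamma> t) (\<gamma>' t') \<ge> 2*l - t - t' - K0"
            using pair_lower[OF g1 g2 g3 slim1 slim2 upg L1g L2g _ c0 L1(1) tt] pos unfolding K0_def by simp
          moreover have "T = 2*l - t - t'" using tt unfolding T_def by (simp add: max_def)
          ultimately show ?thesis by simp
        qed
      qed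
      have Hd: "\<bar>hdist p q - T\<bar> \<le> ln 3" using hd_bound_diff[where t=t and t'=t', OF False] p q unfolding T_def l_def by simp
      have "F p = \<gamma> t" "F q = \<gamma>' t'" using p q by (auto simp: \<gamma>_def \<gamma>'_def)
      then show ?thesis using U Lo Hd K0 c0 pos unfolding K_def by (simp add: abs_le_iff max_def split: if_splits)
    qed
  qed
qed

end
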